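(* Let $T>0$, $L_x,L_y>0$, and let $R,P,Q$ be real-valued $C^2$ functions on the wedge $W_T=\{(u,x,y,z): u\ge 0,\ z\ge 0,\ u+z\le T\}$, periodic in $x$ with period $L_x$ and in $y$ with period $L_y$, satisfying $$2R_u = P_x+Q_y+R_z,\qquad P_z=R_x,\qquad Q_z=R_y .$$ Then $$\int_{\Sigma_T}\big(R_x^2+R_y^2+R_z^2+P_x^2+Q_x^2+P_y^2+Q_y^2\big)\,d\Sigma_T \le 2\left(\int_{\Sigma_u}\big(R_x^2+R_y^2+R_z^2\big)\,d\Sigma_u+\int_{\Sigma_z}\big(P_x^2+Q_x^2+P_y^2+Q_y^2\big)\,d\Sigma_z\right).$$
   Context: Coordinates $(u,x,y,z)$ with $u=t-z$, where $(t,x,y,z)$ are Cartesian Minkowski coordinates; subscripts denote partial derivatives. All integrals in $x,y$ are over one period $[0,L_x]\times[0,L_y]$. Surfaces and measures: $\Sigma_u=\{u=0,\ 0\le z\le T\}$ with $d\Sigma_u=dz\,dx\,dy$; $\Sigma_z=\{z=0,\ 0\le u\le T\}$ with $d\Sigma_z=du\,dx\,dy$; $\Sigma_T=\{u+z=T,\ 0\le z\le T\}$, on which an integral $\int_{\Sigma_T}F\,d\Sigma_T$ means $\int_0^T\int\int F(T-z,x,y,z)\,dx\,dy\,dz$. *)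

theory Defs
  imports "HOL-Analysis.Analysis"
begin

type_synonym pt = "real \<times> real \<times> real \<times> real"  (* (u,x,y,z) *)

definition wedge :: "real \<Rightarrow> pt set" where
  "wedge T = {(u,x,y,z). u \<ge> 0 \<and> z \<ge> 0 \<and> u + z \<le> T}"

definition C2_with :: "pt set \<Rightarrow> (pt \<Rightarrow> real) \<Rightarrow> (pt \<Rightarrow> pt \<Rightarrow>\<^sub>L real) \<Rightarrow> bool" where
  "C2_with W f Df \<longleftrightarrow>
     (\<forall>p\<in>W. (f has_derivative blinfun_apply (Df p)) (at p within W)) \<and>
     (\<exists>D2 :: pt \<Rightarrow> pt \<Rightarrow>\<^sub>L (pt \<Rightarrow>\<^sub>L real).
        (\<forall>p\<in>W. (Df has_derivative blinfun_apply (D2 p)) (at p within W)) \<and> continuous_on W D2)"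

definition eu :: pt where "eu = (1,0,0,0)"
definition ex :: pt where "ex = (0,1,0,0)"
definition ey :: pt where "ey = (0,0,1,0)"
definition ez :: pt where "ez = (0,0,0,1)"

definition periodic_xy :: "pt set \<Rightarrow> real \<Rightarrow> real \<Rightarrow> (pt \<Rightarrow> real) \<Rightarrow> bool" where
  "periodic_xy W Lx Ly f \<longleftrightarrow>
     (\<forall>u x y z. (u,x,y,z) \<in> W \<longrightarrow> f (u, x + Lx, y, z) = f (u,x,y,z) \<and> f (u, x, y + Ly, z) = f (u,x,y,z))"

definition per_int :: "real \<Rightarrow> real \<Rightarrow> (real \<Rightarrow> real \<Rightarrow> real) \<Rightarrow> real" where
  "per_int Lx Ly F = integral {0..Lx} (\<lambda>x. integral {0..Ly} (\<lambda>y. F x y))"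

end

theory Submission
  imports Defs
begin

lemma ftc_real:
  fixes f f' :: "real \<Rightarrow> real"
  assumes "a \<le> b" "\<And>x. x \<in> {a..b} \<Longrightarrow> (f has_real_derivative f' x) (at x within {a..b})"
  shows "integral {a..b} f' = f b - f a"
  using fundamental_theorem_of_calculus[OF assms(1), of f f'] assms(2)
  by (simp add: has_real_derivative_iff_has_vector_derivative integral_unique)

lemma line_deriv:
  fixes f :: "'a::real_normed_vector \<Rightarrow> real"
  assumes df: "\<And>q. q \<in> S \<Longrightarrow> (f has_derivative Df q) (at q within S)"
    and g: "\<And>t. g t = c + t *\<^sub>R v" and sub: "g ` I \<subseteq> S" and t: "t \<in> I"
  shows "((\<lambda>t. f (g t)) has_real_derivative Df (g t) v) (at t within I)"
proof -
  have gg: "g = (\<lambda>t. c + t *\<^sub>R v)" using g by auto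
  have "(g has_derivative (\<lambda>h. h *\<^sub>R v)) (at t within I)"
    unfolding gg by (auto intro!: derivative_eq_intros)
  from has_derivative_in_compose2[OF df sub t this]
  have *: "((\<lambda>t. f (g t)) has_derivative (\<lambda>h. Df (g t) (h *\<^sub>R v))) (at t within I)" .
  have "linear (Df (g t))" using df[of "g t"] sub t has_derivative_linear by blast
  then have "(\<lambda>h. Df (g t) (h *\<^sub>R v)) = (*) (Df (g t) v)"
    by (auto simp: linear_cmul)
  with * show ?thesis unfolding has_field_derivative_def by simp
qed

lemma swap2:
  fixes f :: "real \<Rightarrow> real \<Rightarrow> real"
  assumes "continuous_on ({a..b}\<times>{c..d}) (\<lambda>(x,y). f x y)"
  shows "integral {a..b} (\<lambda>x. integral {c..d} (f x)) = integral {c..d} (\<lambda>y. integral {a..b} (\<lambda>x. f x y))"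
  using integral_swap_continuous[of a c b d f] assms by (simp add: cbox_Pair_eq)

lemma cont_param:
  fixes f :: "'a::topological_space \<Rightarrow> real \<Rightarrow> real"
  assumes "continuous_on (U \<times> {a..b}) (\<lambda>(x,t). f x t)"
  shows "continuous_on U (\<lambda>x. integral {a..b} (f x))"
  using integral_continuous_on_param[of U a b f] assms by simp

lemma cont_swap:
  assumes "continuous_on (A\<times>B) (\<lambda>(x,y). f x y)"
  shows "continuous_on (B\<times>A) (\<lambda>(y,x). f x y)"
proof -
  have "continuous_on (B\<times>A) ((\<lambda>(x,y). f x y) \<circ> prod.swap)"
    by (rule continuous_on_compose[OF continuous_on_swap]) (use assms in \<open>simp add: product_swap\<close>)
  then show ?thesis by (simp add: comp_def case_prod_unfold)
qed

lemma pos_int: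
  fixes g :: "real \<Rightarrow> real \<Rightarrow> real"
  assumes c: "continuous_on ({0..h0}\<times>{0..h0}) (\<lambda>(t,s). g s t)" and h0: "h0 > 0" and g0: "g 0 0 > 0"
  shows "\<exists>h. 0<h \<and> h \<le> h0 \<and> integral {0..h} (\<lambda>t. integral {0..h} (\<lambda>s. g s t)) > 0"
proof -
  define m where "m = g 0 0"
  have "(0::real,0::real) \<in> {0..h0}\<times>{0..h0}" using h0 by auto
  with c obtain \<delta> where d: "\<delta> > 0" "\<And>y. y \<in> {0..h0}\<times>{0..h0} \<Longrightarrow> dist y (0,0) < \<delta> \<Longrightarrow>
      dist ((\<lambda>(t,s). g s t) y) ((\<lambda>(t,s). g s t) (0,0)) < m/2"
    unfolding continuous_on_iff m_def using g0 by (metis half_gt_zero)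
  define h where "h = min h0 (\<delta>/3)"
  have h: "h > 0" "h \<le> h0" using h0 d by (auto simp: h_def)
  have lb: "g s t \<ge> m/2" if "s \<in> {0..h}" "t \<in> {0..h}" for s t
  proof -
    have "dist (t,s) (0::real,0::real) \<le> dist t 0 + dist s 0"
      unfolding dist_Pair_Pair using sqrt_sum_squares_le_sum_abs[of "dist t 0" "dist s 0"] by simp
    also have "\<dots> < \<delta>" using that d by (auto simp: h_def dist_real_def)
    finally have "dist (g s t) (g 0 0) < m/2"
      using d(2)[of "(t,s)"] that h by auto
    then show ?thesis unfolding dist_real_def m_def by linarith
  qed
  have cs: "continuous_on ({0..h}\<times>{0..h}) (\<lambda>(t,s). g s t)"
    by (rule continuous_on_subset[OF c]) (use h in auto)
  have ints: "(\<lambda>s. g s t) integrable_on {0..h}" if "t \<in> {0..h}" for t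
    by (rule integrable_continuous_interval, rule continuous_on_compose2[OF cs, of _ "\<lambda>s. (t,s)", simplified])
       (use that in \<open>auto intro!: continuous_intros\<close>)
  have "integral {0..h} (\<lambda>t. integral {0..h} (\<lambda>s. m/2)) \<le> integral {0..h} (\<lambda>t. integral {0..h} (\<lambda>s. g s t))"
    apply (rule integral_le)
      apply (simp add: integrable_const_ivl)
     apply (rule integrable_continuous_interval, rule cont_param)
     apply (rule continuous_on_subset[OF cs], simp)
    apply (rule integral_le)
    using ints lb by (auto simp: integrable_const_ivl)
  moreover have "integral {0..h} (\<lambda>t. integral {0..h} (\<lambda>s. m/2)) > 0"
    using h g0 by (simp add: m_def)
  ultimately show ?thesis using h by force
qed


lemma clairaut:
  fixes f :: "'a::real_normed_vector \<Rightarrow> real" and Df :: "'a \<Rightarrow> 'a \<Rightarrow>\<^sub>L real"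
    and D2 :: "'a \<Rightarrow> 'a \<Rightarrow>\<^sub>L ('a \<Rightarrow>\<^sub>L real)"
  assumes G: "open G" "p \<in> G"
    and d1: "\<And>q. q \<in> G \<Longrightarrow> (f has_derivative Df q) (at q)"
    and d2: "\<And>q. q \<in> G \<Longrightarrow> (Df has_derivative D2 q) (at q)"
    and c2: "continuous_on G D2"
  shows "D2 p v w = D2 p w v"
proof -
  obtain \<epsilon> where \<epsilon>: "\<epsilon>>0" "ball p \<epsilon> \<subseteq> G" using G openE by blast
  define h0 where "h0 = \<epsilon> / (norm v + norm w + 1)"
  have h0: "h0 > 0" using \<epsilon> by (simp add: h0_def add_nonneg_pos)
  define q where "q s t = p + s *\<^sub>R v + t *\<^sub>R w" for s t
  have qG: "q s t \<in> G" if "s \<in> {0..h0}" "t \<in> {0..h0}" for s t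
  proof -
    have "norm (s *\<^sub>R v + t *\<^sub>R w) \<le> s * norm v + t * norm w"
      using that by (smt (verit) norm_scaleR norm_triangle_ineq atLeastAtMost_iff abs_of_nonneg)
    also have "\<dots> \<le> h0 * norm v + h0 * norm w"
      using that by (intro add_mono mult_right_mono) auto
    also have "\<dots> < \<epsilon>"
    proof -
      have "h0 * (norm v + norm w) < h0 * (norm v + norm w + 1)" using h0 by simp
      also have "\<dots> = \<epsilon>" unfolding h0_def
        using add_nonneg_pos[OF add_nonneg_nonneg[OF norm_ge_zero norm_ge_zero] zero_less_one, of v w] by simp
      finally show ?thesis by (simp add: algebra_simps)
    qed
    finally have lt: "norm (s *\<^sub>R v + t *\<^sub>R w) < \<epsilon>" .
    have "norm (- (s *\<^sub>R v) - t *\<^sub>R w) = norm (s *\<^sub>R v + t *\<^sub>R w)"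
      using norm_minus_cancel[of "s *\<^sub>R v + t *\<^sub>R w"] by (simp add: algebra_simps)
    with lt have "q s t \<in> ball p \<epsilon>" by (simp add: q_def dist_norm)
    then show ?thesis using \<epsilon> by auto
  qed
  have d1': "\<And>q. q \<in> G \<Longrightarrow> (f has_derivative Df q) (at q within G)"
    using d1 has_derivative_at_withinI by blast
  have d2': "\<And>q. q \<in> G \<Longrightarrow> ((\<lambda>q. Df q u) has_derivative (\<lambda>x. D2 q x u)) (at q within G)" for u
    using bounded_linear.has_derivative[OF blinfun.bounded_linear_left d2] has_derivative_at_withinI by blast
  have cD2: "continuous_on ({0..h0}\<times>{0..h0}) (\<lambda>(s,t). D2 (q s t))"
    unfolding case_prod_unfold
    by (rule continuous_on_compose2[OF c2]) (auto intro!: continuous_intros simp: q_def qG[unfolded q_def])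
  define g where "g s t = D2 (q s t) v w - D2 (q s t) w v" for s t
  have cg: "continuous_on ({0..h0}\<times>{0..h0}) (\<lambda>(s,t). g s t)"
    unfolding g_def using cD2 by (auto intro!: continuous_intros simp: split_beta)
  have cg': "continuous_on ({0..h0}\<times>{0..h0}) (\<lambda>(t,s). g s t)"
    using cont_swap[OF cg] .
  have int0: "integral {0..h} (\<lambda>t. integral {0..h} (\<lambda>s. g s t)) = 0" if h: "0 < h" "h \<le> h0" for h
  proof -
    have sub: "{0..h} \<subseteq> {0..h0}" using h by auto
    have qG': "q s t \<in> G" if "s \<in> {0..h}" "t \<in> {0..h}" for s t using qG that sub by auto
    have cD2h: "continuous_on ({0..h}\<times>{0..h}) (\<lambda>(s,t). D2 (q s t))"
      by (rule continuous_on_subset[OF cD2]) (use sub in auto)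
    have cA: "continuous_on ({0..h}\<times>{0..h}) (\<lambda>(x,y). D2 (q x y) a b)" for a b
      using cD2h by (auto intro!: continuous_intros simp: split_beta)
    have cB: "continuous_on ({0..h}\<times>{0..h}) (\<lambda>(y,x). D2 (q x y) a b)" for a b
      using cont_swap[OF cA] .
    have int1: "(\<lambda>s. D2 (q s t) a b) integrable_on {0..h}" if "t \<in> {0..h}" for t a b
      by (rule integrable_continuous_interval, rule continuous_on_compose2[OF cA, of _ "\<lambda>s. (s,t)", simplified])
         (use that in \<open>auto intro!: continuous_intros\<close>)
    have int2: "(\<lambda>t. D2 (q s t) a b) integrable_on {0..h}" if "s \<in> {0..h}" for s a b
      by (rule integrable_continuous_interval, rule continuous_on_compose2[OF cA, of _ "\<lambda>t. (s,t)", simplified])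
         (use that in \<open>auto intro!: continuous_intros\<close>)
    have int3: "(\<lambda>t. integral {0..h} (\<lambda>s. D2 (q s t) a b)) integrable_on {0..h}" for a b
      by (rule integrable_continuous_interval, rule cont_param) (use cB in \<open>simp\<close>)
    have I1: "integral {0..h} (\<lambda>s. D2 (q s t) v w) = Df (q h t) w - Df (q 0 t) w" if "t \<in> {0..h}" for t
      using h(1) apply (intro ftc_real[where f="\<lambda>s. Df (q s t) w"], simp)
      apply (rule line_deriv[where f="\<lambda>q. Df q w" and S=G and c="p + t *\<^sub>R w" and v=v, OF d2'])
      using qG' that by (auto simp: image_subset_iff) (auto simp: q_def algebra_simps)
    have I2: "integral {0..h} (\<lambda>t. D2 (q s t) w v) = Df (q s h) v - Df (q s 0) v" if "s \<in> {0..h}" for s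
      using h(1) apply (intro ftc_real[where f="\<lambda>t. Df (q s t) v"], simp)
      apply (rule line_deriv[where f="\<lambda>q. Df q v" and S=G and c="p + s *\<^sub>R v" and v=w, OF d2'])
      using qG' that by (auto simp: image_subset_iff) (auto simp: q_def algebra_simps)
    have J1: "integral {0..h} (\<lambda>t. Df (q h t) w - Df (q 0 t) w) = (f (q h h) - f (q 0 h)) - (f (q h 0) - f (q 0 0))"
    proof -
      have "integral {0..h} (\<lambda>t. Df (q h t) w - Df (q 0 t) w) = (f (q h h) - f (q 0 h)) - (f (q h 0) - f (q 0 0))"
        using h(1) apply (intro ftc_real[where f="\<lambda>t. f (q h t) - f (q 0 t)", simplified], simp)
        apply (rule DERIV_diff)
        subgoal for x
          apply (rule line_deriv[where f=f and S=G and c="p + h *\<^sub>R v" and v=w, OF d1'])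
          using qG' by (auto simp: image_subset_iff) (auto simp: q_def algebra_simps)
        subgoal for x
          apply (rule line_deriv[where f=f and S=G and c="p + 0 *\<^sub>R v" and v=w, OF d1'])
          using qG' h by (auto simp: image_subset_iff) (auto simp: q_def algebra_simps)
        done
      then show ?thesis .
    qed
    have J2: "integral {0..h} (\<lambda>s. Df (q s h) v - Df (q s 0) v) = (f (q h h) - f (q 0 h)) - (f (q h 0) - f (q 0 0))"
    proof -
      have "integral {0..h} (\<lambda>s. Df (q s h) v - Df (q s 0) v) = (f (q h h) - f (q h 0)) - (f (q 0 h) - f (q 0 0))"
        using h(1) apply (intro ftc_real[where f="\<lambda>s. f (q s h) - f (q s 0)", simplified], simp)
        apply (rule DERIV_diff)
        subgoal for x
          apply (rule line_deriv[where f=f and S=G and c="p + h *\<^sub>R w" and v=v, OF d1'])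
          using qG' by (auto simp: image_subset_iff) (auto simp: q_def algebra_simps)
        subgoal for x
          apply (rule line_deriv[where f=f and S=G and c="p + 0 *\<^sub>R w" and v=v, OF d1'])
          using qG' h by (auto simp: image_subset_iff) (auto simp: q_def algebra_simps)
        done
      then show ?thesis by simp
    qed
    have "integral {0..h} (\<lambda>t. integral {0..h} (\<lambda>s. g s t))
        = integral {0..h} (\<lambda>t. integral {0..h} (\<lambda>s. D2 (q s t) v w) - integral {0..h} (\<lambda>s. D2 (q s t) w v))"
      unfolding g_def by (rule integral_cong, rule integral_diff) (auto intro: int1)
    also have "\<dots> = integral {0..h} (\<lambda>t. integral {0..h} (\<lambda>s. D2 (q s t) v w)) - integral {0..h} (\<lambda>t. integral {0..h} (\<lambda>s. D2 (q s t) w v))"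
      by (rule integral_diff) (auto intro: int3)
    also have "integral {0..h} (\<lambda>t. integral {0..h} (\<lambda>s. D2 (q s t) w v)) = integral {0..h} (\<lambda>s. integral {0..h} (\<lambda>t. D2 (q s t) w v))"
      by (rule swap2[symmetric]) (use cA in simp)
    also have "\<dots> = integral {0..h} (\<lambda>s. Df (q s h) v - Df (q s 0) v)"
      by (rule integral_cong) (use I2 in auto)
    also have "integral {0..h} (\<lambda>t. integral {0..h} (\<lambda>s. D2 (q s t) v w)) = integral {0..h} (\<lambda>t. Df (q h t) w - Df (q 0 t) w)"
      by (rule integral_cong) (use I1 in auto)
    finally show ?thesis using J1 J2 by simp
  qed
  have "g 0 0 = 0"
  proof (rule ccontr)
    assume ne: "g 0 0 \<noteq> 0"
    show False
    proof (cases "g 0 0 > 0")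
      case True
      from pos_int[OF cg' h0 True] int0 show False by force
    next
      case False
      with ne have "(\<lambda>s t. - g s t) 0 0 > 0" by simp
      have "continuous_on ({0..h0}\<times>{0..h0}) (\<lambda>(t,s). (\<lambda>s t. - g s t) s t)"
        using cg' by (auto intro!: continuous_intros simp: split_beta)
      from pos_int[where g="\<lambda>s t. - g s t", OF this h0] \<open>(\<lambda>s t. - g s t) 0 0 > 0\<close> int0 show False
        by (auto simp: integral_neg)
    qed
  qed
  then show ?thesis by (simp add: g_def q_def)
qed


definition wo :: "real \<Rightarrow> pt set" where
  "wo T = {(u,x,y,z). 0 < u \<and> 0 < z \<and> u + z < T}"

lemma open_wo: "open (wo T)"
proof -
  have "wo T = {p. 0 < fst p} \<inter> {p. 0 < snd (snd (snd p))} \<inter> {p. fst p + snd (snd (snd p)) < T}"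
    by (auto simp: wo_def)
  then show ?thesis
    by (auto intro!: open_Int open_Collect_less continuous_intros)
qed

lemma wo_sub: "wo T \<subseteq> wedge T"
  by (auto simp: wo_def wedge_def)

lemma wedge_closure:
  assumes T: "T > 0" and p: "p \<in> wedge T"
  shows "\<exists>xs. (\<forall>n. xs n \<in> wo T) \<and> xs \<longlonglongrightarrow> p"
proof -
  obtain u x y z where pe: "p = (u,x,y,z)" by (cases p) auto
  with p have uz: "u \<ge> 0" "z \<ge> 0" "u + z \<le> T" by (auto simp: wedge_def)
  define t :: "nat \<Rightarrow> real" where "t n = 1 / (2 + real n)" for n
  have t: "0 < t n" "t n < 1" for n by (auto simp: t_def)
  have t0: "t \<longlonglongrightarrow> 0" unfolding t_def
    by (rule tendsto_divide_0[OF tendsto_const]) (rule filterlim_at_top_imp_at_infinity[OF filterlim_tendsto_add_at_top[OF tendsto_const filterlim_real_sequentially]])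
  define xs where "xs n = (u + t n * (T/3 - u), x, y, z + t n * (T/3 - z))" for n
  have "xs n \<in> wo T" for n
  proof -
    have a: "u + t n * (T/3 - u) = (1 - t n) * u + t n * (T/3)" by (simp add: algebra_simps)
    have b: "z + t n * (T/3 - z) = (1 - t n) * z + t n * (T/3)" by (simp add: algebra_simps)
    have "0 < (1 - t n) * u + t n * (T/3)"
      using t[of n] uz T by (intro add_nonneg_pos) auto
    moreover have "0 < (1 - t n) * z + t n * (T/3)"
      using t[of n] uz T by (intro add_nonneg_pos) auto
    moreover have "(1 - t n) * u + t n * (T/3) + ((1 - t n) * z + t n * (T/3)) < T"
    proof -
      have "(1 - t n) * (u + z) \<le> (1 - t n) * T" using t[of n] uz by (intro mult_left_mono) auto
      moreover have "t n * (2*T/3) < t n * T" using t[of n] T by simp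
      ultimately show ?thesis by (simp add: algebra_simps)
    qed
    ultimately show ?thesis unfolding xs_def wo_def a b by simp
  qed
  moreover have "xs \<longlonglongrightarrow> (u + 0 * (T/3 - u), x, y, z + 0 * (T/3 - z))"
    unfolding xs_def by (intro tendsto_intros t0)
  ultimately show ?thesis using pe by auto
qed

lemma wedge_ext:
  fixes f g :: "pt \<Rightarrow> 'b::t2_space"
  assumes T: "T > 0" and cf: "continuous_on (wedge T) f" and cg: "continuous_on (wedge T) g"
    and eq: "\<And>q. q \<in> wo T \<Longrightarrow> f q = g q" and p: "p \<in> wedge T"
  shows "f p = g p"
proof -
  obtain xs where xs: "\<forall>n. xs n \<in> wo T" "xs \<longlonglongrightarrow> p" using wedge_closure[OF T p] by blast
  have xsW: "\<forall>n. xs n \<in> wedge T" using xs wo_sub by auto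
  have "(f \<circ> xs) \<longlonglongrightarrow> f p" using cf p xsW xs(2) unfolding continuous_on_sequentially by blast
  moreover have "(g \<circ> xs) \<longlonglongrightarrow> g p" using cg p xsW xs(2) unfolding continuous_on_sequentially by blast
  moreover have "f \<circ> xs = g \<circ> xs" unfolding comp_def using xs(1) by (intro ext eq) auto
  ultimately show ?thesis using LIMSEQ_unique by (metis (no_types))
qed

lemma at_wo: "p \<in> wo T \<Longrightarrow> at p within wedge T = at p"
  by (rule at_within_open_subset[OF _ open_wo wo_sub])

lemma deriv_vanish:
  assumes "p \<in> wo T" "(F has_derivative F') (at p within wedge T)" "\<forall>q\<in>wo T. F q = 0"
  shows "F' v = 0"
proof -
  have 1: "(F has_derivative F') (at p)" using assms(2) at_wo[OF assms(1)] by simp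
  have "((\<lambda>_. 0) has_derivative (\<lambda>_. 0)) (at p)" by simp
  then have 2: "(F has_derivative (\<lambda>_. 0)) (at p)"
    by (rule has_derivative_transform_within_open[OF _ open_wo assms(1)]) (use assms(3) in auto)
  from has_derivative_unique[OF 1 2] show ?thesis by simp
qed


lemma shift_deriv:
  fixes f :: "pt \<Rightarrow> real" and Df :: "pt \<Rightarrow> pt \<Rightarrow>\<^sub>L real"
  assumes T: "T > 0"
    and d1: "\<And>p. p \<in> wedge T \<Longrightarrow> (f has_derivative Df p) (at p within wedge T)"
    and cDf: "continuous_on (wedge T) Df"
    and shW: "\<And>p. p \<in> wedge T \<Longrightarrow> p + c \<in> wedge T"
    and shO: "\<And>p. p \<in> wo T \<Longrightarrow> p + c \<in> wo T"
    and fsh: "\<And>p. p \<in> wedge T \<Longrightarrow> f (p + c) = f p"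
    and p: "p \<in> wedge T"
  shows "Df (p + c) w = Df p w"
proof (rule wedge_ext[OF T _ _ _ p, of "\<lambda>p. Df (p + c) w" "\<lambda>p. Df p w"])
  show "continuous_on (wedge T) (\<lambda>p. Df (p + c) w)"
    by (intro continuous_intros continuous_on_compose2[OF cDf]) (use shW in auto)
  show "continuous_on (wedge T) (\<lambda>p. Df p w)"
    by (intro continuous_intros cDf)
  fix q assume q: "q \<in> wo T"
  have qW: "q \<in> wedge T" using q wo_sub by auto
  have a: "(f has_derivative Df q) (at q)" using d1[OF qW] at_wo[OF q] by simp
  have "(f has_derivative Df (q + c)) (at (q + c))" using d1[OF shW[OF qW]] at_wo[OF shO[OF q]] by simp
  from has_derivative_compose[OF has_derivative_add_const[OF has_derivative_ident] this]
  have "((\<lambda>x. f (x + c)) has_derivative Df (q + c)) (at q)" by simp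
  then have b: "(f has_derivative Df (q + c)) (at q)"
    by (rule has_derivative_transform_within_open[OF _ open_wo q]) (use fsh wo_sub in blast)
  from has_derivative_unique[OF a b] show "Df (q + c) w = Df q w" by simp
qed

locale c2fun =
  fixes T Lx Ly :: real and f :: "pt \<Rightarrow> real" and Df :: "pt \<Rightarrow> pt \<Rightarrow>\<^sub>L real"
    and D2 :: "pt \<Rightarrow> pt \<Rightarrow>\<^sub>L pt \<Rightarrow>\<^sub>L real"
  assumes T: "T > 0"
    and d1: "\<And>p. p \<in> wedge T \<Longrightarrow> (f has_derivative Df p) (at p within wedge T)"
    and d2: "\<And>p. p \<in> wedge T \<Longrightarrow> (Df has_derivative D2 p) (at p within wedge T)"
    and c2: "continuous_on (wedge T) D2"
    and per: "periodic_xy (wedge T) Lx Ly f"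
begin

lemma cDf: "continuous_on (wedge T) Df"
  using has_derivative_continuous_on[OF d2] .

lemma cDfun[continuous_intros]:
  "continuous_on S g \<Longrightarrow> g ` S \<subseteq> wedge T \<Longrightarrow> continuous_on S (\<lambda>t. Df (g t))"
  by (rule continuous_on_compose2[OF cDf])

lemma cD2fun[continuous_intros]:
  "continuous_on S g \<Longrightarrow> g ` S \<subseteq> wedge T \<Longrightarrow> continuous_on S (\<lambda>t. D2 (g t))"
  by (rule continuous_on_compose2[OF c2])

lemma cD1[continuous_intros]:
  "continuous_on S g \<Longrightarrow> g ` S \<subseteq> wedge T \<Longrightarrow> continuous_on S h \<Longrightarrow> continuous_on S (\<lambda>t. Df (g t) (h t))"
  by (intro continuous_intros continuous_on_compose2[OF cDf]) auto

lemma cD2[continuous_intros]: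
  "continuous_on S g \<Longrightarrow> g ` S \<subseteq> wedge T \<Longrightarrow> continuous_on S h \<Longrightarrow> continuous_on S k \<Longrightarrow>
   continuous_on S (\<lambda>t. D2 (g t) (h t) (k t))"
  by (intro continuous_intros continuous_on_compose2[OF c2]) auto

lemma dD: "p \<in> wedge T \<Longrightarrow> ((\<lambda>q. Df q w) has_derivative (\<lambda>v. D2 p v w)) (at p within wedge T)"
  using bounded_linear.has_derivative[OF blinfun.bounded_linear_left d2] by blast

lemma sym: assumes p: "p \<in> wedge T" shows "D2 p v w = D2 p w v"
proof (rule wedge_ext[OF T _ _ _ p, of "\<lambda>p. D2 p v w" "\<lambda>p. D2 p w v"])
  show "continuous_on (wedge T) (\<lambda>p. D2 p v w)" "continuous_on (wedge T) (\<lambda>p. D2 p w v)"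
    by (auto intro!: continuous_intros c2)
  fix q assume q: "q \<in> wo T"
  show "D2 q v w = D2 q w v"
  proof (rule clairaut[OF open_wo q])
    fix r assume r: "r \<in> wo T"
    then have rW: "r \<in> wedge T" using wo_sub by auto
    show "(f has_derivative Df r) (at r)" using d1[OF rW] at_wo[OF r] by simp
    show "(Df has_derivative D2 r) (at r)" using d2[OF rW] at_wo[OF r] by simp
  next
    show "continuous_on (wo T) D2" using continuous_on_subset[OF c2 wo_sub] .
  qed
qed

lemma per_x: assumes "(u,x,y,z) \<in> wedge T" shows "Df (u,x+Lx,y,z) w = Df (u,x,y,z) w"
  using shift_deriv[OF T d1 cDf, of "(0,Lx,0,0)" "(u,x,y,z)" w] assms per
  by (auto simp: wedge_def wo_def periodic_xy_def)

lemma per_y: assumes "(u,x,y,z) \<in> wedge T" shows "Df (u,x,y+Ly,z) w = Df (u,x,y,z) w"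
  using shift_deriv[OF T d1 cDf, of "(0,0,Ly,0)" "(u,x,y,z)" w] assms per
  by (auto simp: wedge_def wo_def periodic_xy_def)

end


lemma rot3:
  fixes G :: "real \<Rightarrow> real \<Rightarrow> real \<Rightarrow> real"
  assumes c: "continuous_on ({a..b}\<times>{c..d}\<times>{e..f}) (\<lambda>(x,y,z). G x y z)"
  shows "integral {a..b} (\<lambda>x. integral {c..d} (\<lambda>y. integral {e..f} (\<lambda>z. G x y z)))
       = integral {c..d} (\<lambda>y. integral {e..f} (\<lambda>z. integral {a..b} (\<lambda>x. G x y z)))"
proof -
  have c': "continuous_on ({a..b}\<times>{c..d}\<times>{e..f}) (\<lambda>w. G (fst w) (fst (snd w)) (snd (snd w)))"
    using c by (simp add: case_prod_unfold)
  have c1: "continuous_on (({a..b}\<times>{c..d})\<times>{e..f}) (\<lambda>w. G (fst (fst w)) (snd (fst w)) (snd w))"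
    by (rule continuous_on_compose2[OF c', of _ "\<lambda>w. (fst (fst w), snd (fst w), snd w)", simplified])
       (auto intro!: continuous_intros)
  have c2: "continuous_on ({a..b}\<times>{c..d}) (\<lambda>xy. integral {e..f} (\<lambda>z. G (fst xy) (snd xy) z))"
    by (rule cont_param) (use c1 in \<open>simp add: case_prod_unfold\<close>)
  have "integral {a..b} (\<lambda>x. integral {c..d} (\<lambda>y. integral {e..f} (\<lambda>z. G x y z)))
      = integral {c..d} (\<lambda>y. integral {a..b} (\<lambda>x. integral {e..f} (\<lambda>z. G x y z)))"
    by (rule swap2) (use c2 in \<open>simp add: case_prod_unfold\<close>)
  also have "\<dots> = integral {c..d} (\<lambda>y. integral {e..f} (\<lambda>z. integral {a..b} (\<lambda>x. G x y z)))"
  proof (rule integral_cong)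
    fix y assume y: "y \<in> {c..d}"
    show "integral {a..b} (\<lambda>x. integral {e..f} (\<lambda>z. G x y z)) = integral {e..f} (\<lambda>z. integral {a..b} (\<lambda>x. G x y z))"
      by (rule swap2, unfold case_prod_unfold, rule continuous_on_compose2[OF c', of _ "\<lambda>w. (fst w, y, snd w)", simplified])
         (use y in \<open>auto intro!: continuous_intros\<close>)
  qed
  finally show ?thesis .
qed

lemma per_int_int1:
  fixes f :: "real \<Rightarrow> real \<Rightarrow> real"
  assumes c: "continuous_on ({0..Lx}\<times>{0..Ly}) (\<lambda>(x,y). f x y)" and x: "x \<in> {0..Lx}"
  shows "(\<lambda>y. f x y) integrable_on {0..Ly}"
  by (rule integrable_continuous_interval, rule continuous_on_compose2[OF c[unfolded case_prod_unfold], of _ "\<lambda>y. (x,y)", simplified])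
     (use x in \<open>auto intro!: continuous_intros\<close>)

lemma per_int_int2:
  fixes f :: "real \<Rightarrow> real \<Rightarrow> real"
  assumes c: "continuous_on ({0..Lx}\<times>{0..Ly}) (\<lambda>(x,y). f x y)"
  shows "(\<lambda>x. integral {0..Ly} (\<lambda>y. f x y)) integrable_on {0..Lx}"
  by (rule integrable_continuous_interval, rule cont_param) (use c in simp)

lemma per_int_mono:
  fixes f g :: "real \<Rightarrow> real \<Rightarrow> real"
  assumes cf: "continuous_on ({0..Lx}\<times>{0..Ly}) (\<lambda>(x,y). f x y)"
    and cg: "continuous_on ({0..Lx}\<times>{0..Ly}) (\<lambda>(x,y). g x y)"
    and le: "\<And>x y. x \<in> {0..Lx} \<Longrightarrow> y \<in> {0..Ly} \<Longrightarrow> f x y \<le> g x y"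
  shows "per_int Lx Ly f \<le> per_int Lx Ly g"
  unfolding per_int_def
  by (rule integral_le[OF per_int_int2[OF cf] per_int_int2[OF cg]], rule integral_le[OF per_int_int1[OF cf] per_int_int1[OF cg]])
     (use le in auto)

lemma per_int_add:
  fixes f g :: "real \<Rightarrow> real \<Rightarrow> real"
  assumes cf: "continuous_on ({0..Lx}\<times>{0..Ly}) (\<lambda>(x,y). f x y)"
    and cg: "continuous_on ({0..Lx}\<times>{0..Ly}) (\<lambda>(x,y). g x y)"
  shows "per_int Lx Ly (\<lambda>x y. f x y + g x y) = per_int Lx Ly f + per_int Lx Ly g"
proof -
  have "per_int Lx Ly (\<lambda>x y. f x y + g x y) = integral {0..Lx} (\<lambda>x. integral {0..Ly} (\<lambda>y. f x y) + integral {0..Ly} (\<lambda>y. g x y))"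
    unfolding per_int_def
    by (rule integral_cong, rule integral_add[OF per_int_int1[OF cf] per_int_int1[OF cg]]) auto
  also have "\<dots> = per_int Lx Ly f + per_int Lx Ly g"
    unfolding per_int_def by (rule integral_add[OF per_int_int2[OF cf] per_int_int2[OF cg]])
  finally show ?thesis .
qed

lemma per_int_cmult: "per_int Lx Ly (\<lambda>x y. c * f x y) = c * per_int Lx Ly f"
  unfolding per_int_def by simp

locale setting =
  R: c2fun T Lx Ly R DR D2R + P: c2fun T Lx Ly P DP D2P + Q: c2fun T Lx Ly Q DQ D2Q
  for T Lx Ly R DR D2R P DP D2P Q DQ D2Q +
  assumes Lx: "Lx > 0" and Ly: "Ly > 0"
    and eq1: "\<forall>p\<in>wedge T. 2 * DR p eu = DP p ex + DQ p ey + DR p ez"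
    and eq2: "\<forall>p\<in>wedge T. DP p ez = DR p ex"
    and eq3: "\<forall>p\<in>wedge T. DQ p ez = DR p ey"
begin

lemma T: "T > 0" using R.T .

lemma r1: assumes p: "p \<in> wedge T"
  shows "2 * D2R p v eu = D2P p v ex + D2Q p v ey + D2R p v ez"
proof -
  have "(\<lambda>p. 2 * D2R p v eu - (D2P p v ex + D2Q p v ey + D2R p v ez)) p = (\<lambda>_. 0) p"
  proof (rule wedge_ext[OF T _ _ _ p])
    show "continuous_on (wedge T) (\<lambda>p. 2 * D2R p v eu - (D2P p v ex + D2Q p v ey + D2R p v ez))"
      by (auto intro!: continuous_intros R.c2 P.c2 Q.c2)
    fix q assume q: "q \<in> wo T"
    have qW: "q \<in> wedge T" using q wo_sub by auto
    have "((\<lambda>p. 2 * DR p eu - (DP p ex + DQ p ey + DR p ez)) has_derivative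
       (\<lambda>v. 2 * D2R q v eu - (D2P q v ex + D2Q q v ey + D2R q v ez))) (at q within wedge T)"
      by (auto intro!: derivative_eq_intros R.dD P.dD Q.dD R.d2 P.d2 Q.d2 qW)
    moreover have "\<forall>r\<in>wo T. 2 * DR r eu - (DP r ex + DQ r ey + DR r ez) = 0" using eq1 wo_sub by auto
    ultimately show "2 * D2R q v eu - (D2P q v ex + D2Q q v ey + D2R q v ez) = 0" using deriv_vanish[OF q] by blast
  qed auto
  then show ?thesis by simp
qed

lemma r2: assumes p: "p \<in> wedge T" shows "D2P p v ez = D2R p v ex"
proof -
  have "(\<lambda>p. D2P p v ez - D2R p v ex) p = (\<lambda>_. 0) p"
  proof (rule wedge_ext[OF T _ _ _ p])
    show "continuous_on (wedge T) (\<lambda>p. D2P p v ez - D2R p v ex)"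
      by (auto intro!: continuous_intros R.c2 P.c2 Q.c2)
    fix q assume q: "q \<in> wo T"
    have qW: "q \<in> wedge T" using q wo_sub by auto
    have "((\<lambda>p. DP p ez - DR p ex) has_derivative (\<lambda>v. D2P q v ez - D2R q v ex)) (at q within wedge T)"
      by (auto intro!: derivative_eq_intros R.dD P.dD Q.dD R.d2 P.d2 Q.d2 qW)
    moreover have "\<forall>r\<in>wo T. DP r ez - DR r ex = 0" using eq2 wo_sub by auto
    ultimately show "D2P q v ez - D2R q v ex = 0" using deriv_vanish[OF q] by blast
  qed auto
  then show ?thesis by simp
qed

lemma r3: assumes p: "p \<in> wedge T" shows "D2Q p v ez = D2R p v ey"
proof -
  have "(\<lambda>p. D2Q p v ez - D2R p v ey) p = (\<lambda>_. 0) p"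
  proof (rule wedge_ext[OF T _ _ _ p])
    show "continuous_on (wedge T) (\<lambda>p. D2Q p v ez - D2R p v ey)"
      by (auto intro!: continuous_intros R.c2 P.c2 Q.c2)
    fix q assume q: "q \<in> wo T"
    have qW: "q \<in> wedge T" using q wo_sub by auto
    have "((\<lambda>p. DQ p ez - DR p ey) has_derivative (\<lambda>v. D2Q q v ez - D2R q v ey)) (at q within wedge T)"
      by (auto intro!: derivative_eq_intros R.dD P.dD Q.dD R.d2 P.d2 Q.d2 qW)
    moreover have "\<forall>r\<in>wo T. DQ r ez - DR r ey = 0" using eq3 wo_sub by auto
    ultimately show "D2Q q v ez - D2R q v ey = 0" using deriv_vanish[OF q] by blast
  qed auto
  then show ?thesis by simp
qed

definition "A p = (DR p ex)^2 + (DR p ey)^2 + (DR p ez)^2"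
definition "Ps p = (DP p ex)^2 + (DQ p ex)^2 + (DP p ey)^2 + (DQ p ey)^2"
definition "B p = Ps p - (DR p ez)^2"
definition "X p = 2*(DR p ez * DR p ex + DR p ex * DP p ex + DR p ey * DP p ey)"
definition "Y p = 2*(DR p ez * DR p ey + DR p ex * DQ p ex + DR p ey * DQ p ey)"
definition "Ad p v = 2*DR p ex * D2R p v ex + 2*DR p ey*D2R p v ey + 2*DR p ez * D2R p v ez"
definition "Bd p v = 2*DP p ex*D2P p v ex + 2*DQ p ex * D2Q p v ex + 2*DP p ey*D2P p v ey
   + 2*DQ p ey*D2Q p v ey - 2*DR p ez*D2R p v ez"
definition "Xd p v = 2*(D2R p v ez * DR p ex + DR p ez * D2R p v ex + D2R p v ex * DP p ex
   + DR p ex * D2P p v ex + D2R p v ey * DP p ey + DR p ey * D2P p v ey)"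
definition "Yd p v = 2*(D2R p v ez * DR p ey + DR p ez * D2R p v ey + D2R p v ex * DQ p ex
   + DR p ex * D2Q p v ex + D2R p v ey * DQ p ey + DR p ey * D2Q p v ey)"

lemma dA: "p \<in> wedge T \<Longrightarrow> (A has_derivative Ad p) (at p within wedge T)"
  unfolding A_def Ad_def[abs_def]
  by (rule derivative_eq_intros R.dD P.dD Q.dD | assumption | simp)+ (simp add: fun_eq_iff algebra_simps)

lemma dB: "p \<in> wedge T \<Longrightarrow> (B has_derivative Bd p) (at p within wedge T)"
  unfolding B_def Ps_def Bd_def[abs_def]
  by (rule derivative_eq_intros R.dD P.dD Q.dD | assumption | simp)+ (simp add: fun_eq_iff algebra_simps)

lemma dX: "p \<in> wedge T \<Longrightarrow> (X has_derivative Xd p) (at p within wedge T)"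
  unfolding X_def Xd_def[abs_def]
  by (rule derivative_eq_intros R.dD P.dD Q.dD | assumption | simp)+ (simp add: fun_eq_iff algebra_simps)

lemma dY: "p \<in> wedge T \<Longrightarrow> (Y has_derivative Yd p) (at p within wedge T)"
  unfolding Y_def Yd_def[abs_def]
  by (rule derivative_eq_intros R.dD P.dD Q.dD | assumption | simp)+ (simp add: fun_eq_iff algebra_simps)

lemma key: assumes p: "p \<in> wedge T"
  shows "2 * Ad p eu + Bd p ez = Xd p ex + Yd p ey"
proof -
  have e1: "D2R p eu ex = (D2P p ex ex + D2Q p ex ey + D2R p ex ez) / 2"
    using r1[OF p, of ex] R.sym[OF p, of eu ex] by simp
  have e2: "D2R p eu ey = (D2P p ey ex + D2Q p ey ey + D2R p ey ez) / 2"
    using r1[OF p, of ey] R.sym[OF p, of eu ey] by simp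
  have e3: "D2R p eu ez = (D2P p ez ex + D2Q p ez ey + D2R p ez ez) / 2"
    using r1[OF p, of ez] R.sym[OF p, of eu ez] by simp
  have e4: "D2P p ez ex = D2R p ex ex" using r2[OF p, of ex] P.sym[OF p, of ez ex] by simp
  have e5: "D2Q p ez ey = D2R p ey ey" using r3[OF p, of ey] Q.sym[OF p, of ez ey] by simp
  have e6: "D2Q p ez ex = D2R p ex ey" using r3[OF p, of ex] Q.sym[OF p, of ez ex] by simp
  have e7: "D2P p ez ey = D2R p ex ey" using r2[OF p, of ey] P.sym[OF p, of ez ey] R.sym[OF p, of ey ex] by simp
  have e8: "D2R p ey ex = D2R p ex ey" using R.sym[OF p] by simp
  have e9: "D2P p ey ex = D2P p ex ey" using P.sym[OF p] by simp
  have e10: "D2Q p ey ex = D2Q p ex ey" using Q.sym[OF p] by simp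
  have e11: "D2R p ez ex = D2R p ex ez" using R.sym[OF p] by simp
  have e12: "D2R p ez ey = D2R p ey ez" using R.sym[OF p] by simp
  show ?thesis
    unfolding Ad_def Bd_def Xd_def Yd_def e1 e2 e3 e4 e5 e6 e7 e8 e9 e10 e11 e12
    by (simp add: field_simps)
qed

definition "F p = 2 * A p + B p"
definition "Fd p v = 2 * Ad p v + Bd p v"

lemma dF: "p \<in> wedge T \<Longrightarrow> (F has_derivative Fd p) (at p within wedge T)"
  unfolding F_def[abs_def] Fd_def[abs_def]
  by (auto intro!: derivative_eq_intros dA dB)

lemma cA[continuous_intros]: "continuous_on S g \<Longrightarrow> g ` S \<subseteq> wedge T \<Longrightarrow> continuous_on S (\<lambda>t. A (g t))"
  unfolding A_def by (auto intro!: continuous_intros)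
lemma cB[continuous_intros]: "continuous_on S g \<Longrightarrow> g ` S \<subseteq> wedge T \<Longrightarrow> continuous_on S (\<lambda>t. B (g t))"
  unfolding B_def Ps_def by (auto intro!: continuous_intros)
lemma cPs[continuous_intros]: "continuous_on S g \<Longrightarrow> g ` S \<subseteq> wedge T \<Longrightarrow> continuous_on S (\<lambda>t. Ps (g t))"
  unfolding Ps_def by (auto intro!: continuous_intros)
lemma cF[continuous_intros]: "continuous_on S g \<Longrightarrow> g ` S \<subseteq> wedge T \<Longrightarrow> continuous_on S (\<lambda>t. F (g t))"
  unfolding F_def by (auto intro!: continuous_intros)
lemma cX[continuous_intros]: "continuous_on S g \<Longrightarrow> g ` S \<subseteq> wedge T \<Longrightarrow> continuous_on S (\<lambda>t. X (g t))"
  unfolding X_def by (auto intro!: continuous_intros)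
lemma cY[continuous_intros]: "continuous_on S g \<Longrightarrow> g ` S \<subseteq> wedge T \<Longrightarrow> continuous_on S (\<lambda>t. Y (g t))"
  unfolding Y_def by (auto intro!: continuous_intros)
lemma cAd[continuous_intros]: "continuous_on S g \<Longrightarrow> g ` S \<subseteq> wedge T \<Longrightarrow> continuous_on S (\<lambda>t. Ad (g t) v)"
  unfolding Ad_def by (auto intro!: continuous_intros)
lemma cBd[continuous_intros]: "continuous_on S g \<Longrightarrow> g ` S \<subseteq> wedge T \<Longrightarrow> continuous_on S (\<lambda>t. Bd (g t) v)"
  unfolding Bd_def by (auto intro!: continuous_intros)
lemma cFd[continuous_intros]: "continuous_on S g \<Longrightarrow> g ` S \<subseteq> wedge T \<Longrightarrow> continuous_on S (\<lambda>t. Fd (g t) v)"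
  unfolding Fd_def by (auto intro!: continuous_intros)
lemma cXd[continuous_intros]: "continuous_on S g \<Longrightarrow> g ` S \<subseteq> wedge T \<Longrightarrow> continuous_on S (\<lambda>t. Xd (g t) v)"
  unfolding Xd_def by (auto intro!: continuous_intros)
lemma cYd[continuous_intros]: "continuous_on S g \<Longrightarrow> g ` S \<subseteq> wedge T \<Longrightarrow> continuous_on S (\<lambda>t. Yd (g t) v)"
  unfolding Yd_def by (auto intro!: continuous_intros)

lemma dirs: "((a::real), (0::real), (0::real), (b::real)) = a *\<^sub>R eu + b *\<^sub>R ez"
  by (simp add: eu_def ez_def)

lemma Ad_lin: "Ad p (a *\<^sub>R eu + b *\<^sub>R ez) = a * Ad p eu + b * Ad p ez"
  by (simp add: Ad_def blinfun.bilinear_simps algebra_simps)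
lemma Bd_lin: "Bd p (a *\<^sub>R eu + b *\<^sub>R ez) = a * Bd p eu + b * Bd p ez"
  by (simp add: Bd_def blinfun.bilinear_simps algebra_simps)
lemma Fd_lin: "Fd p (a *\<^sub>R eu + b *\<^sub>R ez) = a * Fd p eu + b * Fd p ez"
  by (simp add: Fd_def Ad_lin Bd_lin algebra_simps)

definition "pp x y s z = (s*(T-z)/T, x, y, s*z/T)"

lemma pp_in: "0 \<le> s \<Longrightarrow> s \<le> T \<Longrightarrow> 0 \<le> z \<Longrightarrow> z \<le> T \<Longrightarrow> pp x y s z \<in> wedge T"
proof -
  assume a: "0 \<le> s" "s \<le> T" "0 \<le> z" "z \<le> T"
  have "s*(T-z)/T + s*z/T = s" using T by (simp add: field_simps)
  then show ?thesis using a T unfolding pp_def wedge_def by auto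
qed

lemma pp_img: "S \<subseteq> {0..T} \<Longrightarrow> S' \<subseteq> {0..T} \<Longrightarrow> (\<forall>t\<in>U. s t \<in> S \<and> z t \<in> S') \<Longrightarrow> (\<lambda>t. pp (x t) (y t) (s t) (z t)) ` U \<subseteq> wedge T"
  using pp_in by (force simp: image_subset_iff)

lemma cont_pp[continuous_intros]: "continuous_on S a \<Longrightarrow> continuous_on S b \<Longrightarrow> continuous_on S c \<Longrightarrow> continuous_on S d \<Longrightarrow>
  continuous_on S (\<lambda>t. pp (a t) (b t) (c t) (d t))"
  unfolding pp_def using T by (auto intro!: continuous_intros)

definition "G x y s z = s/T * (Xd (pp x y s z) ex + Yd (pp x y s z) ey)"

lemma M1:
  "integral {0..T} (\<lambda>z. F (T-z,x,y,z)) = integral {0..T} (\<lambda>s. 2 * A (0,x,y,s)) + integral {0..T} (\<lambda>s. B (s,x,y,0))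
     + integral {0..T} (\<lambda>s. integral {0..T} (\<lambda>z. G x y s z))"
proof -
  define Ps' where "Ps' s z = F (pp x y s z)/T + s/T * (((T-z)/T) * Fd (pp x y s z) eu + (z/T) * Fd (pp x y s z) ez)" for s z
  define Pz where "Pz s z = F (pp x y s z)/T + (z/T)*2*((-s/T)*Ad (pp x y s z) eu + (s/T)*Ad (pp x y s z) ez)
     - ((T-z)/T)*((-s/T)*Bd (pp x y s z) eu + (s/T)*Bd (pp x y s z) ez)" for s z
  have T0: "T \<noteq> 0" using T by simp
  have id: "Ps' s z = Pz s z + G x y s z" if "s \<in> {0..T}" "z \<in> {0..T}" for s z
  proof -
    have k: "2 * Ad (pp x y s z) eu + Bd (pp x y s z) ez = Xd (pp x y s z) ex + Yd (pp x y s z) ey"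
      using key pp_in that by auto
    show ?thesis unfolding Ps'_def Pz_def G_def k[symmetric] Fd_def using T0
      by (simp add: field_simps) (simp add: algebra_simps)?
  qed
  have i: "integral {0..T} (\<lambda>s. Ps' s z) = F (T-z,x,y,z)" if z: "z \<in> {0..T}" for z
  proof -
    have "integral {0..T} (\<lambda>s. Ps' s z) = T/T * F (pp x y T z) - 0/T * F (pp x y 0 z)"
    proof (rule ftc_real[where f="\<lambda>s. s/T * F (pp x y s z)"])
      show "0 \<le> T" using T by simp
      fix s assume s: "s \<in> {0..T}"
      have l: "((\<lambda>s. F (pp x y s z)) has_real_derivative Fd (pp x y s z) ((T-z)/T, 0, 0, z/T)) (at s within {0..T})"
        by (rule line_deriv[where S="wedge T" and c="(0,x,y,0)", OF dF])
           (use z s pp_in in \<open>auto simp: pp_def\<close>)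
      have d0: "((\<lambda>s. s/T) has_real_derivative 1/T) (at s within {0..T})"
        by (auto intro!: derivative_eq_intros simp: T0 field_simps)
      from DERIV_mult[OF d0 l] show "((\<lambda>s. s/T * F (pp x y s z)) has_real_derivative Ps' s z) (at s within {0..T})"
        by (rule DERIV_cong) (unfold dirs Fd_lin, simp add: Ps'_def algebra_simps)
    qed
    also have "\<dots> = F (T-z,x,y,z)" using T0 by (simp add: pp_def)
    finally show ?thesis .
  qed
  have ii: "integral {0..T} (\<lambda>z. Pz s z) = 2 * A (0,x,y,s) + B (s,x,y,0)" if s: "s \<in> {0..T}" for s
  proof -
    have "integral {0..T} (\<lambda>z. Pz s z) = (T/T*2*A (pp x y s T) - (T-T)/T * B (pp x y s T)) - (0/T*2*A (pp x y s 0) - (T-0)/T * B (pp x y s 0))"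
    proof (rule ftc_real[where f="\<lambda>z. z/T*2*A (pp x y s z) - (T-z)/T * B (pp x y s z)"])
      show "0 \<le> T" using T by simp
      fix z assume z: "z \<in> {0..T}"
      have eqp: "pp x y s z = (s,x,y,0) + z *\<^sub>R (-s/T, 0, 0, s/T)" for z
        using T0 by (simp add: pp_def field_simps)
      have la: "((\<lambda>z. A (pp x y s z)) has_real_derivative Ad (pp x y s z) (-s/T, 0, 0, s/T)) (at z within {0..T})"
        by (rule line_deriv[where S="wedge T" and c="(s,x,y,0)", OF dA eqp]) (use z s pp_in in auto)
      have lb: "((\<lambda>z. B (pp x y s z)) has_real_derivative Bd (pp x y s z) (-s/T, 0, 0, s/T)) (at z within {0..T})"
        by (rule line_deriv[where S="wedge T" and c="(s,x,y,0)", OF dB eqp]) (use z s pp_in in auto)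
      have d1: "((\<lambda>z. z/T*2) has_real_derivative 2/T) (at z within {0..T})"
        by (auto intro!: derivative_eq_intros simp: T0 field_simps)
      have d2: "((\<lambda>z. (T-z)/T) has_real_derivative -1/T) (at z within {0..T})"
        by (auto intro!: derivative_eq_intros simp: T0 field_simps)
      from DERIV_diff[OF DERIV_mult[OF d1 la] DERIV_mult[OF d2 lb]] show "((\<lambda>z. z/T*2*A (pp x y s z) - (T-z)/T * B (pp x y s z)) has_real_derivative Pz s z) (at z within {0..T})"
        by (rule DERIV_cong) (unfold dirs Ad_lin Bd_lin, simp add: Pz_def F_def field_simps add_divide_distrib)
    qed
    also have "\<dots> = 2 * A (0,x,y,s) + B (s,x,y,0)" using T0 by (simp add: pp_def)
    finally show ?thesis .
  qed
  have c1: "continuous_on ({0..T}\<times>{0..T}) (\<lambda>(z,s). Ps' s z)"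
    unfolding Ps'_def case_prod_unfold
    by (auto intro!: continuous_intros pp_in simp: T0)
  have cG: "continuous_on ({0..T}\<times>{0..T}) (\<lambda>(s,z). G x y s z)"
    unfolding G_def case_prod_unfold
    by (auto intro!: continuous_intros pp_in simp: T0)
  have cPz: "continuous_on ({0..T}\<times>{0..T}) (\<lambda>(s,z). Pz s z)"
    unfolding Pz_def case_prod_unfold
    by (auto intro!: continuous_intros pp_in simp: T0)
  have "integral {0..T} (\<lambda>z. F (T-z,x,y,z)) = integral {0..T} (\<lambda>z. integral {0..T} (\<lambda>s. Ps' s z))"
    by (rule integral_cong) (use i in auto)
  also have "\<dots> = integral {0..T} (\<lambda>s. integral {0..T} (\<lambda>z. Ps' s z))"
    by (rule swap2) (use c1 in simp)
  also have "\<dots> = integral {0..T} (\<lambda>s. integral {0..T} (\<lambda>z. Pz s z) + integral {0..T} (\<lambda>z. G x y s z))"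
  proof (rule integral_cong)
    fix s assume s: "s \<in> {0..T}"
    have "integral {0..T} (\<lambda>z. Ps' s z) = integral {0..T} (\<lambda>z. Pz s z + G x y s z)"
      by (rule integral_cong) (use id s in auto)
    also have "\<dots> = integral {0..T} (\<lambda>z. Pz s z) + integral {0..T} (\<lambda>z. G x y s z)"
    proof (rule integral_add)
      show "(\<lambda>z. Pz s z) integrable_on {0..T}"
        by (rule integrable_continuous_interval, rule continuous_on_compose2[OF cPz[unfolded case_prod_unfold], of _ "\<lambda>z. (s,z)", simplified])
           (use s in \<open>auto intro!: continuous_intros\<close>)
      show "(\<lambda>z. G x y s z) integrable_on {0..T}"
        by (rule integrable_continuous_interval, rule continuous_on_compose2[OF cG[unfolded case_prod_unfold], of _ "\<lambda>z. (s,z)", simplified])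
           (use s in \<open>auto intro!: continuous_intros\<close>)
    qed
    finally show "integral {0..T} (\<lambda>z. Ps' s z) = integral {0..T} (\<lambda>z. Pz s z) + integral {0..T} (\<lambda>z. G x y s z)" .
  qed
  also have "\<dots> = integral {0..T} (\<lambda>s. 2 * A (0,x,y,s) + B (s,x,y,0) + integral {0..T} (\<lambda>z. G x y s z))"
    by (rule integral_cong) (use ii in auto)
  also have "\<dots> = integral {0..T} (\<lambda>s. 2 * A (0,x,y,s)) + integral {0..T} (\<lambda>s. B (s,x,y,0))
     + integral {0..T} (\<lambda>s. integral {0..T} (\<lambda>z. G x y s z))"
  proof -
    have i1: "(\<lambda>s. 2 * A (0,x,y,s)) integrable_on {0..T}"
      by (rule integrable_continuous_interval) (auto intro!: continuous_intros simp: wedge_def)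
    have i2: "(\<lambda>s. B (s,x,y,0)) integrable_on {0..T}"
      by (rule integrable_continuous_interval) (auto intro!: continuous_intros simp: wedge_def)
    have i3: "(\<lambda>s. integral {0..T} (\<lambda>z. G x y s z)) integrable_on {0..T}"
      by (rule integrable_continuous_interval, rule cont_param) (use cG in simp)
    show ?thesis using i1 i2 i3 by (simp add: integral_add integrable_add)
  qed
  finally show ?thesis .
qed

definition "GX x y s z = s/T * Xd (pp x y s z) ex"
definition "GY x y s z = s/T * Yd (pp x y s z) ey"

lemma T0: "T \<noteq> 0" using T by simp

lemma GX_zero: assumes s: "s \<in> {0..T}" and z: "z \<in> {0..T}"
  shows "integral {0..Lx} (\<lambda>x. GX x y s z) = 0"
proof -
  have "integral {0..Lx} (\<lambda>x. GX x y s z) = s/T * X (pp Lx y s z) - s/T * X (pp 0 y s z)"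
  proof (rule ftc_real[where f="\<lambda>x. s/T * X (pp x y s z)"])
    show "0 \<le> Lx" using Lx by simp
    fix x assume x: "x \<in> {0..Lx}"
    have l: "((\<lambda>x. X (pp x y s z)) has_real_derivative Xd (pp x y s z) ex) (at x within {0..Lx})"
      by (rule line_deriv[where S="wedge T" and c="pp 0 y s z", OF dX])
         (use s z x pp_in in \<open>auto simp: pp_def ex_def\<close>)
    show "((\<lambda>x. s/T * X (pp x y s z)) has_real_derivative GX x y s z) (at x within {0..Lx})"
      unfolding GX_def by (rule DERIV_cmult[OF l])
  qed
  also have "\<dots> = 0"
  proof -
    have W: "(s*(T-z)/T, 0, y, s*z/T) \<in> wedge T" using pp_in[of s z 0 y] s z by (simp add: pp_def)
    have "DR (pp Lx y s z) w = DR (pp 0 y s z) w" "DP (pp Lx y s z) w = DP (pp 0 y s z) w" for w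
      using R.per_x[OF W, of w] P.per_x[OF W, of w] by (simp_all add: pp_def)
    then show ?thesis by (simp add: X_def)
  qed
  finally show ?thesis .
qed

lemma GY_zero: assumes s: "s \<in> {0..T}" and z: "z \<in> {0..T}"
  shows "integral {0..Ly} (\<lambda>y. GY x y s z) = 0"
proof -
  have "integral {0..Ly} (\<lambda>y. GY x y s z) = s/T * Y (pp x Ly s z) - s/T * Y (pp x 0 s z)"
  proof (rule ftc_real[where f="\<lambda>y. s/T * Y (pp x y s z)"])
    show "0 \<le> Ly" using Ly by simp
    fix y assume y: "y \<in> {0..Ly}"
    have l: "((\<lambda>y. Y (pp x y s z)) has_real_derivative Yd (pp x y s z) ey) (at y within {0..Ly})"
      by (rule line_deriv[where S="wedge T" and c="pp x 0 s z", OF dY])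
         (use s z y pp_in in \<open>auto simp: pp_def ey_def\<close>)
    show "((\<lambda>y. s/T * Y (pp x y s z)) has_real_derivative GY x y s z) (at y within {0..Ly})"
      unfolding GY_def by (rule DERIV_cmult[OF l])
  qed
  also have "\<dots> = 0"
  proof -
    have W: "(s*(T-z)/T, x, 0, s*z/T) \<in> wedge T" using pp_in[of s z x 0] s z by (simp add: pp_def)
    have "DR (pp x Ly s z) w = DR (pp x 0 s z) w" "DQ (pp x Ly s z) w = DQ (pp x 0 s z) w" for w
      using R.per_y[OF W, of w] Q.per_y[OF W, of w] by (simp_all add: pp_def)
    then show ?thesis by (simp add: Y_def)
  qed
  finally show ?thesis .
qed

lemma cGX: "continuous_on S (\<lambda>t. GX (a t) (b t) (c t) (d t))" if "continuous_on S a" "continuous_on S b"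
  "continuous_on S c" "continuous_on S d" "\<forall>t\<in>S. c t \<in> {0..T} \<and> d t \<in> {0..T}"
  unfolding GX_def using that by (auto intro!: continuous_intros pp_in simp: T0)

lemma cGY: "continuous_on S (\<lambda>t. GY (a t) (b t) (c t) (d t))" if "continuous_on S a" "continuous_on S b"
  "continuous_on S c" "continuous_on S d" "\<forall>t\<in>S. c t \<in> {0..T} \<and> d t \<in> {0..T}"
  unfolding GY_def using that by (auto intro!: continuous_intros pp_in simp: T0)

lemma M2: "per_int Lx Ly (\<lambda>x y. integral {0..T} (\<lambda>s. integral {0..T} (\<lambda>z. G x y s z))) = 0"
proof -
  have GG: "G x y s z = GX x y s z + GY x y s z" for x y s z
    by (simp add: G_def GX_def GY_def algebra_simps)
  have "per_int Lx Ly (\<lambda>x y. integral {0..T} (\<lambda>s. integral {0..T} (\<lambda>z. G x y s z)))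
      = integral {0..Lx} (\<lambda>x. integral {0..T} (\<lambda>s. integral {0..T} (\<lambda>z. integral {0..Ly} (\<lambda>y. G x y s z))))"
    unfolding per_int_def
  proof (rule integral_cong)
    fix x assume x: "x \<in> {0..Lx}"
    show "integral {0..Ly} (\<lambda>y. integral {0..T} (\<lambda>s. integral {0..T} (\<lambda>z. G x y s z)))
        = integral {0..T} (\<lambda>s. integral {0..T} (\<lambda>z. integral {0..Ly} (\<lambda>y. G x y s z)))"
      by (rule rot3) (auto simp: case_prod_unfold GG intro!: continuous_intros cGX cGY)
  qed
  also have "\<dots> = integral {0..Lx} (\<lambda>x. integral {0..T} (\<lambda>s. integral {0..T} (\<lambda>z. integral {0..Ly} (\<lambda>y. GX x y s z))))"
  proof (rule integral_cong, rule integral_cong, rule integral_cong)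
    fix x s z assume x: "x \<in> {0..Lx}" and s: "s \<in> {0..T}" and z: "z \<in> {0..T}"
    have i1: "(\<lambda>y. GX x y s z) integrable_on {0..Ly}"
      by (rule integrable_continuous_interval) (use s z in \<open>auto intro!: continuous_intros cGX\<close>)
    have i2: "(\<lambda>y. GY x y s z) integrable_on {0..Ly}"
      by (rule integrable_continuous_interval) (use s z in \<open>auto intro!: continuous_intros cGY\<close>)
    show "integral {0..Ly} (\<lambda>y. G x y s z) = integral {0..Ly} (\<lambda>y. GX x y s z)"
      unfolding GG integral_add[OF i1 i2] GY_zero[OF s z] by simp
  qed
  also have "\<dots> = integral {0..T} (\<lambda>s. integral {0..T} (\<lambda>z. integral {0..Lx} (\<lambda>x. integral {0..Ly} (\<lambda>y. GX x y s z))))"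
  proof -
    have "continuous_on (({0..Lx}\<times>{0..T}\<times>{0..T})\<times>{0..Ly}) (\<lambda>(w,y). GX (fst w) y (fst (snd w)) (snd (snd w)))"
      unfolding case_prod_unfold by (rule cGX) (auto intro!: continuous_intros)
    then have "continuous_on ({0..Lx}\<times>{0..T}\<times>{0..T}) (\<lambda>w. integral {0..Ly} (\<lambda>y. GX (fst w) y (fst (snd w)) (snd (snd w))))"
      by (rule cont_param)
    then have "continuous_on ({0..Lx}\<times>{0..T}\<times>{0..T}) (\<lambda>(x,s,z). integral {0..Ly} (\<lambda>y. GX x y s z))"
      by (simp add: case_prod_unfold)
    then show ?thesis by (rule rot3)
  qed
  also have "\<dots> = integral {0..T} (\<lambda>s. integral {0..T} (\<lambda>z. integral {0..Ly} (\<lambda>y. integral {0..Lx} (\<lambda>x. GX x y s z))))"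
  proof (rule integral_cong, rule integral_cong)
    fix s z assume s: "s \<in> {0..T}" and z: "z \<in> {0..T}"
    show "integral {0..Lx} (\<lambda>x. integral {0..Ly} (\<lambda>y. GX x y s z)) = integral {0..Ly} (\<lambda>y. integral {0..Lx} (\<lambda>x. GX x y s z))"
      by (rule swap2) (use s z in \<open>auto simp: case_prod_unfold intro!: continuous_intros cGX\<close>)
  qed
  also have "\<dots> = integral {0..T} (\<lambda>s. integral {0..T} (\<lambda>z. integral {0..Ly} (\<lambda>y. 0::real)))"
    by (rule integral_cong, rule integral_cong, rule integral_cong) (simp add: GX_zero)
  also have "\<dots> = 0" by simp
  finally show ?thesis .
qed


lemma GG: "G x y s z = GX x y s z + GY x y s z"
  by (simp add: G_def GX_def GY_def algebra_simps)

lemma final: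
  "integral {0..T} (\<lambda>z. per_int Lx Ly (\<lambda>x y. A (T-z,x,y,z) + Ps (T-z,x,y,z)))
   \<le> 2 * (integral {0..T} (\<lambda>z. per_int Lx Ly (\<lambda>x y. A (0,x,y,z)))
        + integral {0..T} (\<lambda>u. per_int Lx Ly (\<lambda>x y. Ps (u,x,y,0))))"
proof -
  define eT where "eT x y = integral {0..T} (\<lambda>z. A (T-z,x,y,z) + Ps (T-z,x,y,z))" for x y
  define a0 where "a0 x y = integral {0..T} (\<lambda>z. A (0,x,y,z))" for x y
  define p0 where "p0 x y = integral {0..T} (\<lambda>u. Ps (u,x,y,0))" for x y
  define DD where "DD x y = integral {0..T} (\<lambda>s. integral {0..T} (\<lambda>z. G x y s z))" for x y
  have W1: "(T - z, x, y, z) \<in> wedge T" if "z \<in> {0..T}" for x y z using that by (auto simp: wedge_def)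
  have W2: "(0, x, y, z) \<in> wedge T" if "z \<in> {0..T}" for x y z using that by (auto simp: wedge_def)
  have W3: "(u, x, y, 0) \<in> wedge T" if "u \<in> {0..T}" for x y u using that by (auto simp: wedge_def)
  have h1: "integral {0..T} (\<lambda>z. per_int Lx Ly (\<lambda>x y. A (T-z,x,y,z) + Ps (T-z,x,y,z))) = per_int Lx Ly eT"
    unfolding per_int_def eT_def
    by (rule rot3) (auto simp: case_prod_unfold intro!: continuous_intros W1)
  have h2: "integral {0..T} (\<lambda>z. per_int Lx Ly (\<lambda>x y. A (0,x,y,z))) = per_int Lx Ly a0"
    unfolding per_int_def a0_def
    by (rule rot3) (auto simp: case_prod_unfold intro!: continuous_intros W2)
  have h3: "integral {0..T} (\<lambda>u. per_int Lx Ly (\<lambda>x y. Ps (u,x,y,0))) = per_int Lx Ly p0"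
    unfolding per_int_def p0_def
    by (rule rot3) (auto simp: case_prod_unfold intro!: continuous_intros W3)
  have c_eT: "continuous_on ({0..Lx}\<times>{0..Ly}) (\<lambda>(x,y). eT x y)"
  proof -
    have "continuous_on ({0..Lx}\<times>{0..Ly}) (\<lambda>w. integral {0..T} (\<lambda>z. A (T-z,fst w,snd w,z) + Ps (T-z,fst w,snd w,z)))"
      by (rule cont_param) (auto simp: case_prod_unfold intro!: continuous_intros W1)
    then show ?thesis by (simp add: eT_def case_prod_unfold)
  qed
  have c_a0: "continuous_on ({0..Lx}\<times>{0..Ly}) (\<lambda>(x,y). a0 x y)"
  proof -
    have "continuous_on ({0..Lx}\<times>{0..Ly}) (\<lambda>w. integral {0..T} (\<lambda>z. A (0,fst w,snd w,z)))"
      by (rule cont_param) (auto simp: case_prod_unfold intro!: continuous_intros W2)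
    then show ?thesis by (simp add: a0_def case_prod_unfold)
  qed
  have c_p0: "continuous_on ({0..Lx}\<times>{0..Ly}) (\<lambda>(x,y). p0 x y)"
  proof -
    have "continuous_on ({0..Lx}\<times>{0..Ly}) (\<lambda>w. integral {0..T} (\<lambda>u. Ps (u,fst w,snd w,0)))"
      by (rule cont_param) (auto simp: case_prod_unfold intro!: continuous_intros W3)
    then show ?thesis by (simp add: p0_def case_prod_unfold)
  qed
  have c_DD: "continuous_on ({0..Lx}\<times>{0..Ly}) (\<lambda>(x,y). DD x y)"
  proof -
    have "continuous_on ((({0..Lx}\<times>{0..Ly})\<times>{0..T})\<times>{0..T}) (\<lambda>(v,z). G (fst (fst v)) (snd (fst v)) (snd v) z)"
      unfolding case_prod_unfold GG
      by (intro continuous_intros cGX cGY) (auto intro!: continuous_intros)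
    then have "continuous_on (({0..Lx}\<times>{0..Ly})\<times>{0..T}) (\<lambda>v. integral {0..T} (\<lambda>z. G (fst (fst v)) (snd (fst v)) (snd v) z))"
      by (rule cont_param)
    then have "continuous_on (({0..Lx}\<times>{0..Ly})\<times>{0..T}) (\<lambda>(w,s). integral {0..T} (\<lambda>z. G (fst w) (snd w) s z))"
      by (simp add: case_prod_unfold)
    then have "continuous_on ({0..Lx}\<times>{0..Ly}) (\<lambda>w. integral {0..T} (\<lambda>s. integral {0..T} (\<lambda>z. G (fst w) (snd w) s z)))"
      by (rule cont_param)
    then show ?thesis by (simp add: DD_def case_prod_unfold)
  qed
  have pw: "eT x y \<le> (2 * a0 x y + 2 * p0 x y) + DD x y" if x: "x \<in> {0..Lx}" and y: "y \<in> {0..Ly}" for x y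
  proof -
    have "eT x y \<le> integral {0..T} (\<lambda>z. F (T-z,x,y,z))"
      unfolding eT_def
    proof (rule integral_le)
      show "(\<lambda>z. A (T-z,x,y,z) + Ps (T-z,x,y,z)) integrable_on {0..T}"
        by (rule integrable_continuous_interval) (auto intro!: continuous_intros W1)
      show "(\<lambda>z. F (T-z,x,y,z)) integrable_on {0..T}"
        by (rule integrable_continuous_interval) (auto intro!: continuous_intros W1)
      fix z show "A (T-z,x,y,z) + Ps (T-z,x,y,z) \<le> F (T-z,x,y,z)"
        by (simp add: F_def B_def A_def)
    qed
    also have "\<dots> = integral {0..T} (\<lambda>s. 2 * A (0,x,y,s)) + integral {0..T} (\<lambda>s. B (s,x,y,0)) + DD x y"
      unfolding DD_def by (rule M1)
    also have "\<dots> \<le> 2 * a0 x y + 2 * p0 x y + DD x y"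
    proof -
      have "integral {0..T} (\<lambda>s. B (s,x,y,0)) \<le> integral {0..T} (\<lambda>s. 2 * Ps (s,x,y,0))"
      proof (rule integral_le)
        show "(\<lambda>s. B (s,x,y,0)) integrable_on {0..T}"
          by (rule integrable_continuous_interval) (auto intro!: continuous_intros W3)
        show "(\<lambda>s. 2 * Ps (s,x,y,0)) integrable_on {0..T}"
          by (rule integrable_continuous_interval) (auto intro!: continuous_intros W3)
        fix s show "B (s,x,y,0) \<le> 2 * Ps (s,x,y,0)"
          by (simp add: B_def Ps_def add_nonneg_nonneg add_nonneg_nonneg[OF zero_le_power2 zero_le_power2] le_diff_eq[symmetric])
      qed
      then show ?thesis by (simp add: a0_def p0_def)
    qed
    finally show ?thesis .
  qed
  have "per_int Lx Ly eT \<le> per_int Lx Ly (\<lambda>x y. (2 * a0 x y + 2 * p0 x y) + DD x y)"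
    by (rule per_int_mono[OF c_eT _ pw]) (use c_a0 c_p0 c_DD in \<open>auto simp: case_prod_unfold intro!: continuous_intros\<close>)
  also have "\<dots> = per_int Lx Ly (\<lambda>x y. 2 * a0 x y + 2 * p0 x y) + per_int Lx Ly DD"
    by (rule per_int_add) (use c_a0 c_p0 c_DD in \<open>auto simp: case_prod_unfold intro!: continuous_intros\<close>)
  also have "per_int Lx Ly DD = 0" unfolding DD_def by (rule M2)
  also have "per_int Lx Ly (\<lambda>x y. 2 * a0 x y + 2 * p0 x y) = 2 * per_int Lx Ly a0 + 2 * per_int Lx Ly p0"
    by (subst per_int_add) (use c_a0 c_p0 in \<open>auto simp: case_prod_unfold per_int_cmult intro!: continuous_intros\<close>)
  finally show ?thesis using h1 h2 h3 by simp
qed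

end

theorem mainTheorem2:
  fixes T Lx Ly :: real and R P Q :: "pt \<Rightarrow> real"
    and DR DP DQ :: "pt \<Rightarrow> pt \<Rightarrow>\<^sub>L real"
  assumes "T > 0" "Lx > 0" "Ly > 0"
    and "C2_with (wedge T) R DR" "C2_with (wedge T) P DP" "C2_with (wedge T) Q DQ"
    and "periodic_xy (wedge T) Lx Ly R" "periodic_xy (wedge T) Lx Ly P" "periodic_xy (wedge T) Lx Ly Q"
    and "\<forall>p\<in>wedge T. 2 * DR p eu = DP p ex + DQ p ey + DR p ez"
    and "\<forall>p\<in>wedge T. DP p ez = DR p ex"
    and "\<forall>p\<in>wedge T. DQ p ez = DR p ey"
  shows "integral {0..T} (\<lambda>z. per_int Lx Ly (\<lambda>x y. let p = (T - z, x, y, z) in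
            (DR p ex)\<^sup>2 + (DR p ey)\<^sup>2 + (DR p ez)\<^sup>2 + (DP p ex)\<^sup>2 + (DQ p ex)\<^sup>2
            + (DP p ey)\<^sup>2 + (DQ p ey)\<^sup>2))
    \<le> 2 * (integral {0..T} (\<lambda>z. per_int Lx Ly (\<lambda>x y. let p = (0, x, y, z) in
                (DR p ex)\<^sup>2 + (DR p ey)\<^sup>2 + (DR p ez)\<^sup>2))
           + integral {0..T} (\<lambda>u. per_int Lx Ly (\<lambda>x y. let p = (u, x, y, 0) in
                (DP p ex)\<^sup>2 + (DQ p ex)\<^sup>2 + (DP p ey)\<^sup>2 + (DQ p ey)\<^sup>2)))"
proof -
  have W: "wedge T = wedge T" ..
  obtain D2R where R1: "\<forall>p\<in>wedge T. (R has_derivative blinfun_apply (DR p)) (at p within wedge T)"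
    and R2: "\<forall>p\<in>wedge T. (DR has_derivative blinfun_apply (D2R p)) (at p within wedge T)"
    and R3: "continuous_on (wedge T) D2R"
    using assms(4) unfolding C2_with_def by blast
  obtain D2P where P1: "\<forall>p\<in>wedge T. (P has_derivative blinfun_apply (DP p)) (at p within wedge T)"
    and P2: "\<forall>p\<in>wedge T. (DP has_derivative blinfun_apply (D2P p)) (at p within wedge T)"
    and P3: "continuous_on (wedge T) D2P"
    using assms(5) unfolding C2_with_def by blast
  obtain D2Q where Q1: "\<forall>p\<in>wedge T. (Q has_derivative blinfun_apply (DQ p)) (at p within wedge T)"
    and Q2: "\<forall>p\<in>wedge T. (DQ has_derivative blinfun_apply (D2Q p)) (at p within wedge T)"
    and Q3: "continuous_on (wedge T) D2Q"
    using assms(6) unfolding C2_with_def by blast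
  interpret S: setting T Lx Ly R DR D2R P DP D2P Q DQ D2Q
    by unfold_locales (use assms R1 R2 R3 P1 P2 P3 Q1 Q2 Q3 in auto)
  show ?thesis
    using S.final unfolding S.A_def S.Ps_def Let_def by (simp add: add.assoc)
qed

end
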